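(* Suppose $h$ is $L_h$-smooth (its gradient is $L_h$-Lipschitz in the Euclidean norm) and $h^*$ is twice differentiable on $\mathbb{R}^d$ with $M$-Lipschitz Hessian in the sense that $\|(\nabla^2h^*(x)-\nabla^2h^*(y))u\|\le M\|x-y\|\,\|u\|$ for all $x,y,u\in\mathbb{R}^d$. Then for all $x,y,v\in\mathbb{R}^d$ and $\lambda\in[-1,1]$, $$D_{h^*}(x+\lambda v,x)\le G(x,y,v)\,\lambda^2D_{h^*}(y+v,y),\qquad\text{with } G(x,y,v)=1+2ML_h\big(\|y-x\|+\|v\|\big).$$
   Context: $\|\cdot\|$ is the Euclidean norm. $h^*$ denotes the convex conjugate of the convex function $h$, and for differentiable $\varphi$, $D_\varphi(x,y)=\varphi(x)-\varphi(y)-\nabla\varphi(y)^\top(x-y)$. *)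

theory Defs
  imports "HOL-Analysis.Analysis"
begin

definition convex_conj :: "('a::euclidean_space \<Rightarrow> real) \<Rightarrow> 'a \<Rightarrow> real" where
  "convex_conj h y = (SUP x. y \<bullet> x - h x)"

definition bregman :: "('a::euclidean_space \<Rightarrow> real) \<Rightarrow> ('a \<Rightarrow> 'a) \<Rightarrow> 'a \<Rightarrow> 'a \<Rightarrow> real" where
  "bregman phi grad x y = phi x - phi y - grad y \<bullet> (x - y)"

end

theory Submission
  imports Defs
begin

lemma line_deriv:
  fixes F :: "'a::euclidean_space \<Rightarrow> real"
  assumes "\<And>z. (F has_derivative (\<lambda>u. g z \<bullet> u)) (at z)"
  shows "((\<lambda>s. F (a + s *\<^sub>R b)) has_real_derivative (g (a + s *\<^sub>R b) \<bullet> b)) (at s)"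
proof -
  have 1: "((\<lambda>s. a + s *\<^sub>R b) has_derivative (\<lambda>s. s *\<^sub>R b)) (at s)"
    by (auto intro!: derivative_eq_intros)
  have "((\<lambda>s. F (a + s *\<^sub>R b)) has_derivative (\<lambda>s'. g (a + s *\<^sub>R b) \<bullet> (s' *\<^sub>R b))) (at s)"
    using has_derivative_compose[OF 1 assms] by simp
  then show ?thesis unfolding has_field_derivative_def
    by (rule has_derivative_eq_rhs) (simp add: fun_eq_iff mult.commute)
qed

lemma line_deriv2:
  fixes G :: "'a::euclidean_space \<Rightarrow> 'a"
  assumes "\<And>z. (G has_derivative H z) (at z)"
  shows "((\<lambda>s. G (a + s *\<^sub>R b) \<bullet> c) has_real_derivative (H (a + s *\<^sub>R b) b \<bullet> c)) (at s)"
proof -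
  have 1: "((\<lambda>s. a + s *\<^sub>R b) has_derivative (\<lambda>s. s *\<^sub>R b)) (at s)"
    by (auto intro!: derivative_eq_intros)
  have 2: "((\<lambda>s. G (a + s *\<^sub>R b)) has_derivative (\<lambda>s'. H (a + s *\<^sub>R b) (s' *\<^sub>R b))) (at s)"
    using has_derivative_compose[OF 1 assms] by simp
  have lin: "linear (H (a + s *\<^sub>R b))"
    using assms has_derivative_linear by blast
  have "((\<lambda>s. G (a + s *\<^sub>R b) \<bullet> c) has_derivative (\<lambda>s'. H (a + s *\<^sub>R b) (s' *\<^sub>R b) \<bullet> c)) (at s)"
    using has_derivative_inner_left[OF 2] by simp
  then show ?thesis unfolding has_field_derivative_def
    by (rule has_derivative_eq_rhs) (simp add: fun_eq_iff mult.commute linear_cmul[OF lin])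
qed

lemma descent:
  fixes h :: "'a::euclidean_space \<Rightarrow> real"
  assumes hg: "\<And>x. (h has_derivative (\<lambda>u. gh x \<bullet> u)) (at x)"
   and lip: "\<And>x y. norm (gh x - gh y) \<le> L * norm (x - y)"
  shows "h (z + d) \<le> h z + gh z \<bullet> d + L/2 * (norm d)^2"
proof -
  define \<phi> where "\<phi> s = h (z + s *\<^sub>R d) - s * (gh z \<bullet> d) - L/2 * s^2 * (norm d)^2" for s
  have "\<phi> 1 \<le> \<phi> 0"
  proof (rule DERIV_nonpos_imp_nonincreasing[of 0 1 \<phi>])
    fix s :: real assume s: "0 \<le> s" "s \<le> 1"
    have D: "DERIV \<phi> s :> gh (z + s *\<^sub>R d) \<bullet> d - gh z \<bullet> d - L * s * (norm d)^2"
      unfolding \<phi>_def by (auto intro!: derivative_eq_intros line_deriv[OF hg])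
    have "(gh (z + s *\<^sub>R d) - gh z) \<bullet> d \<le> norm (gh (z + s *\<^sub>R d) - gh z) * norm d"
      by (rule norm_cauchy_schwarz)
    also have "\<dots> \<le> L * norm (s *\<^sub>R d) * norm d"
      using lip[of "z + s *\<^sub>R d" z] by (simp add: mult_right_mono)
    also have "\<dots> = L * s * (norm d)^2" using s by (simp add: power2_eq_square)
    finally show "\<exists>y. DERIV \<phi> s :> y \<and> y \<le> 0" using D by (auto simp: inner_diff_left)
  qed simp
  then show ?thesis unfolding \<phi>_def by simp
qed

lemma conj_strong:
  fixes h :: "'a::euclidean_space \<Rightarrow> real"
  assumes hg: "\<And>x. (h has_derivative (\<lambda>u. gh x \<bullet> u)) (at x)"
   and lip: "\<And>x y. norm (gh x - gh y) \<le> L * norm (x - y)"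
   and Lpos: "L > 0"
   and conj_finite: "\<And>y. bdd_above (range (\<lambda>x. y \<bullet> x - h x))"
   and conj_grad: "\<And>x. (convex_conj h has_derivative (\<lambda>u. gs x \<bullet> u)) (at x)"
  shows "(norm v)^2 / (2*L) \<le> bregman (convex_conj h) gs (y + v) y"
proof -
  have conj_ge: "\<And>w x. w \<bullet> x - h x \<le> convex_conj h w"
    unfolding convex_conj_def by (rule cSUP_upper[OF UNIV_I conj_finite])
  define f where "f x = y \<bullet> x - h x" for x
  have hc: "continuous_on UNIV h"
    using hg has_derivative_continuous continuous_at_imp_continuous_on by blast
  have fc: "continuous_on UNIV f" unfolding f_def by (intro continuous_intros hc)
  define S where "S = {x. f 0 \<le> f x}"
  have closedS: "closed S" unfolding S_def by (rule closed_Collect_le) (auto intro: fc continuous_intros)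
  have boundedS: "bounded S"
  proof -
    define K where "K = (\<Sum>i\<in>Basis. \<bar>convex_conj h (y + i)\<bar> + \<bar>convex_conj h (y - i)\<bar> - f 0)"
    have "norm x \<le> K" if "x \<in> S" for x
    proof -
      have *: "\<bar>x \<bullet> i\<bar> \<le> \<bar>convex_conj h (y + i)\<bar> + \<bar>convex_conj h (y - i)\<bar> - f 0" for i
      proof -
        have "(y + i) \<bullet> x - h x \<le> convex_conj h (y+i)" by (rule conj_ge)
        moreover have "(y - i) \<bullet> x - h x \<le> convex_conj h (y-i)" by (rule conj_ge)
        moreover have "f 0 \<le> f x" using that S_def by simp
        moreover have "(y + i) \<bullet> x = y \<bullet> x + x \<bullet> i" "(y - i) \<bullet> x = y \<bullet> x - x \<bullet> i"
          by (simp_all add: inner_add_left inner_diff_left inner_commute[of i x])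
        moreover note abs_ge_self[of "convex_conj h (y+i)"] abs_ge_self[of "convex_conj h (y-i)"]
          abs_ge_zero[of "convex_conj h (y+i)"] abs_ge_zero[of "convex_conj h (y-i)"]
        ultimately show ?thesis unfolding f_def abs_le_iff by linarith
      qed
      have "norm x \<le> (\<Sum>i\<in>Basis. \<bar>x \<bullet> i\<bar>)" by (rule norm_le_l1)
      also have "\<dots> \<le> K" unfolding K_def by (rule sum_mono) (rule *)
      finally show ?thesis .
    qed
    then show ?thesis unfolding bounded_iff by blast
  qed
  have compS: "compact S" using closedS boundedS compact_eq_bounded_closed by blast
  have "0 \<in> S" unfolding S_def by simp
  then obtain z where zS: "z \<in> S" and zm: "\<forall>x\<in>S. f x \<le> f z"
    using continuous_attains_sup[OF compS, of f] continuous_on_subset[OF fc] by blast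
  have zmax: "f x \<le> f z" for x
  proof (cases "x \<in> S")
    case True then show ?thesis using zm by blast
  next
    case False then show ?thesis using zS unfolding S_def by auto
  qed
  have fd: "(f has_derivative (\<lambda>u. y \<bullet> u - gh z \<bullet> u)) (at z)"
    unfolding f_def by (auto intro!: derivative_eq_intros hg)
  have "(\<lambda>u. y \<bullet> u - gh z \<bullet> u) = (\<lambda>u. 0)"
    by (rule differential_zero_maxmin[of z UNIV, OF _ _ fd]) (auto simp: zmax)
  then have "y \<bullet> (y - gh z) - gh z \<bullet> (y - gh z) = 0" by metis
  then have "(y - gh z) \<bullet> (y - gh z) = 0" by (simp add: inner_diff_left)
  then have gz: "gh z = y" by simp
  have cy: "convex_conj h y = f z"
  proof (rule antisym)
    show "convex_conj h y \<le> f z" unfolding convex_conj_def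
      by (rule cSUP_least) (auto simp: zmax[unfolded f_def] f_def)
    show "f z \<le> convex_conj h y" unfolding f_def by (rule conj_ge)
  qed
  have key: "convex_conj h y + (w - y) \<bullet> z + (norm (w - y))^2/(2*L) \<le> convex_conj h w" for w
  proof -
    define d where "d = (1/L) *\<^sub>R (w - y)"
    have desc: "h (z + d) \<le> h z + y \<bullet> d + L/2 * (norm d)^2"
      using descent[OF hg lip, of z d] gz by simp
    have cg: "w \<bullet> (z + d) - h (z + d) \<le> convex_conj h w" by (rule conj_ge)
    have n1: "(w - y) \<bullet> d = (norm (w - y))^2 / L"
      unfolding d_def by (simp add: power2_norm_eq_inner)
    have n2: "L/2 * (norm d)^2 = (norm (w - y))^2 / (2*L)"
    proof -
      have "norm d = norm (w - y) / L" unfolding d_def using Lpos by simp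
      then show ?thesis using Lpos by (simp add: power_divide power2_eq_square)
    qed
    have "w \<bullet> (z + d) - y \<bullet> d = w \<bullet> z + (w - y) \<bullet> d"
      by (simp add: inner_add_right inner_diff_left)
    moreover have "(w - y) \<bullet> z = w \<bullet> z - y \<bullet> z" by (simp add: inner_diff_left)
    moreover have "(norm (w - y))^2 / L = 2 * ((norm (w - y))^2 / (2*L))" by simp
    ultimately show ?thesis using desc cg n1 n2 cy unfolding f_def by linarith
  qed
  have gsy: "gs y = z"
  proof -
    define u where "u = gs y - z"
    define \<psi> where "\<psi> s = convex_conj h (y + s *\<^sub>R u) - s * (z \<bullet> u)" for s
    have D: "DERIV \<psi> 0 :> gs y \<bullet> u - z \<bullet> u"
      unfolding \<psi>_def using line_deriv[OF conj_grad, of y u 0]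
      by (auto intro!: derivative_eq_intros)
    have "\<psi> 0 \<le> \<psi> s" for s
    proof -
      have "0 \<le> (\<bar>s\<bar> * norm u)\<^sup>2 / (2 * L)" using Lpos by simp
      then show ?thesis
        using key[of "y + s *\<^sub>R u"] unfolding \<psi>_def
        by (simp add: inner_commute)
    qed
    then have "gs y \<bullet> u - z \<bullet> u = 0"
      using DERIV_local_min[OF D, of 1] by auto
    then have "u \<bullet> u = 0" unfolding u_def by (simp add: inner_diff_left)
    then show ?thesis unfolding u_def by simp
  qed
  show ?thesis using key[of "y + v"] gsy unfolding bregman_def by (simp add: inner_commute)
qed

lemma taylor_part:
  fixes F :: "'a::euclidean_space \<Rightarrow> real"
  assumes conj_grad: "\<And>x. (F has_derivative (\<lambda>u. gs x \<bullet> u)) (at x)"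
    and conj_hess: "\<And>x. (gs has_derivative Hs x) (at x)"
    and hess_lip: "\<And>x y u. norm (Hs x u - Hs y u) \<le> M * norm (x - y) * norm u"
    and M0: "M \<ge> 0" and t: "\<bar>t\<bar> \<le> 1"
  shows "bregman F gs (x + t *\<^sub>R v) x \<le> t^2 * bregman F gs (y + v) y
           + t^2 * M * (norm (y - x) + 2 * norm v) * (norm v)^2 / 2"
proof -
  define c where "c = t^2 * M * (norm (y - x) + 2 * norm v) * (norm v)^2"
  define w where "w = t *\<^sub>R v"
  define \<phi>' where "\<phi>' s = gs (x + s *\<^sub>R w) \<bullet> w - gs x \<bullet> w
      - t^2 * (gs (y + s *\<^sub>R v) \<bullet> v - gs y \<bullet> v) - c * s" for s
  define \<phi> where "\<phi> s = F (x + s *\<^sub>R w) - s * (gs x \<bullet> w)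
      - t^2 * (F (y + s *\<^sub>R v) - F y - s * (gs y \<bullet> v)) - F x - c/2 * s^2" for s
  have lin: "linear (Hs z)" for z using conj_hess has_derivative_linear by blast
  have d1: "DERIV \<phi> s :> \<phi>' s" for s
  proof -
    note L1 = line_deriv[OF conj_grad, of x w s] and L2 = line_deriv[OF conj_grad, of y v s]
    show ?thesis
      unfolding \<phi>_def \<phi>'_def
      by (auto intro!: derivative_eq_intros L1 L2 simp: algebra_simps power2_eq_square)
  qed
  have d2: "DERIV \<phi>' s :> t^2 * ((Hs (x + s *\<^sub>R w) v - Hs (y + s *\<^sub>R v) v) \<bullet> v) - c" for s
  proof -
    note L1 = line_deriv2[OF conj_hess, of x w w s] and L2 = line_deriv2[OF conj_hess, of y v v s]
    have e: "Hs (x + s *\<^sub>R w) w \<bullet> w = t^2 * (Hs (x + s *\<^sub>R w) v \<bullet> v)"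
      unfolding w_def by (simp add: linear_cmul[OF lin] power2_eq_square)
    show ?thesis
      unfolding \<phi>'_def
      by (auto intro!: derivative_eq_intros L1 L2 simp: e algebra_simps inner_diff_left)
  qed
  have bnd: "t^2 * ((Hs (x + s *\<^sub>R w) v - Hs (y + s *\<^sub>R v) v) \<bullet> v) - c \<le> 0"
    if s: "0 \<le> s" "s \<le> 1" for s
  proof -
    let ?a = "x + s *\<^sub>R w" and ?b = "y + s *\<^sub>R v"
    have "?a - ?b = (x - y) + (s * t - s) *\<^sub>R v" by (simp add: w_def algebra_simps)
    then have "norm (?a - ?b) \<le> norm (x - y) + \<bar>s * t - s\<bar> * norm v"
      by (metis norm_scaleR norm_triangle_ineq)
    moreover have "\<bar>s * t - s\<bar> \<le> 2"
    proof -
      have "\<bar>s * t - s\<bar> = s * \<bar>t - 1\<bar>" proof -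
        have "s * t - s = s * (t - 1)" by (simp add: algebra_simps)
        then show ?thesis using s by (simp add: abs_mult)
      qed
      also have "\<dots> \<le> 1 * 2" using s t by (intro mult_mono) auto
      finally show ?thesis by simp
    qed
    moreover have "\<bar>s * t - s\<bar> * norm v \<le> 2 * norm v"
      using \<open>\<bar>s * t - s\<bar> \<le> 2\<close> by (rule mult_right_mono) simp
    moreover have "norm (x - y) = norm (y - x)" by (rule norm_minus_commute)
    ultimately have na: "norm (?a - ?b) \<le> norm (y - x) + 2 * norm v"
      by linarith
    have "(Hs ?a v - Hs ?b v) \<bullet> v \<le> norm (Hs ?a v - Hs ?b v) * norm v"
      by (rule norm_cauchy_schwarz)
    also have "\<dots> \<le> M * norm (?a - ?b) * norm v * norm v"
      by (rule mult_right_mono[OF hess_lip]) simp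
    also have "\<dots> \<le> M * (norm (y - x) + 2 * norm v) * norm v * norm v"
      using na M0 by (intro mult_right_mono mult_left_mono) auto
    finally have "t^2 * ((Hs ?a v - Hs ?b v) \<bullet> v) \<le> t^2 * (M * (norm (y - x) + 2 * norm v) * norm v * norm v)"
      by (rule mult_left_mono) simp
    moreover have "c = t^2 * (M * (norm (y - x) + 2 * norm v) * norm v * norm v)"
      unfolding c_def by (simp add: power2_eq_square mult.assoc)
    ultimately show ?thesis by linarith
  qed
  have p0: "\<phi>' 0 = 0" unfolding \<phi>'_def by simp
  have neg: "\<phi>' s \<le> 0" if "0 \<le> s" "s \<le> 1" for s
  proof -
    have "\<phi>' s \<le> \<phi>' 0"
    proof (rule DERIV_nonpos_imp_nonincreasing[of 0 s \<phi>'])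
      fix r :: real assume "0 \<le> r" "r \<le> s"
      then show "\<exists>y. DERIV \<phi>' r :> y \<and> y \<le> 0" using d2[of r] bnd[of r] that by auto
    qed (use that in auto)
    then show ?thesis using p0 by simp
  qed
  have "\<phi> 1 \<le> \<phi> 0"
    by (rule DERIV_nonpos_imp_nonincreasing[of 0 1 \<phi>]) (use d1 neg in auto)
  moreover have "\<phi> 0 = 0" unfolding \<phi>_def by simp
  moreover have "\<phi> 1 = bregman F gs (x + w) x - t^2 * bregman F gs (y + v) y - c/2"
    unfolding \<phi>_def bregman_def by (simp add: algebra_simps)
  moreover have "c/2 = t^2 * M * (norm (y - x) + 2 * norm v) * (norm v)^2 / 2" unfolding c_def by simp
  ultimately show ?thesis unfolding w_def by linarith
qed

theorem proposition1:
  fixes h :: "'a::euclidean_space \<Rightarrow> real"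
    and gh :: "'a \<Rightarrow> 'a" and Lh :: real
    and gs :: "'a \<Rightarrow> 'a" and Hs :: "'a \<Rightarrow> 'a \<Rightarrow> 'a" and M :: real
  assumes h_convex: "convex_on UNIV h"
    and h_grad: "\<And>x. (h has_derivative (\<lambda>u. gh x \<bullet> u)) (at x)"
    and h_smooth: "\<And>x y. norm (gh x - gh y) \<le> Lh * norm (x - y)"
    and conj_finite: "\<And>y. bdd_above (range (\<lambda>x. y \<bullet> x - h x))"
    and conj_grad: "\<And>x. (convex_conj h has_derivative (\<lambda>u. gs x \<bullet> u)) (at x)"
    and conj_hess: "\<And>x. (gs has_derivative Hs x) (at x)"
    and hess_lip: "\<And>x y u. norm (Hs x u - Hs y u) \<le> M * norm (x - y) * norm u"
  shows "\<forall>x y v. \<forall>t\<in>{-1..1::real}.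
    bregman (convex_conj h) gs (x + t *\<^sub>R v) x
      \<le> (1 + 2 * M * Lh * (norm (y - x) + norm v)) * t\<^sup>2 * bregman (convex_conj h) gs (y + v) y"
proof (intro allI ballI)
  fix x y v :: 'a and t :: real
  assume t: "t \<in> {-1..1}"
  obtain b :: 'a where b: "b \<in> Basis" using nonempty_Basis by blast
  have nb: "norm b = 1" using b by simp
  have M0: "M \<ge> 0"
  proof -
    have "norm (Hs b b - Hs 0 b) \<le> M * norm (b - 0) * norm b" by (rule hess_lip)
    then have "norm (Hs b b - Hs 0 b) \<le> M" using nb by simp
    then show ?thesis by (meson norm_ge_zero order_trans)
  qed
  have L0: "Lh \<ge> 0"
  proof -
    have "norm (gh b - gh 0) \<le> Lh * norm (b - 0)" by (rule h_smooth)
    then have "norm (gh b - gh 0) \<le> Lh" using nb by simp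
    then show ?thesis by (meson norm_ge_zero order_trans)
  qed
  define F where "F = convex_conj h"
  define D where "D = bregman F gs (y + v) y"
  have lip1: "norm (gh x - gh y) \<le> (Lh + 1) * norm (x - y)" for x y
    using h_smooth[of x y] by (smt (verit) mult_right_mono norm_ge_zero)
  have "(norm v)^2 / (2 * (Lh + 1)) \<le> D"
    unfolding D_def F_def by (rule conj_strong[OF h_grad lip1 _ conj_finite conj_grad]) (use L0 in simp)
  moreover have "0 \<le> (norm v)^2 / (2 * (Lh + 1))" using L0 by simp
  ultimately have D0: "D \<ge> 0" by linarith
  have SC: "(norm v)^2 / 2 \<le> Lh * D"
  proof (cases "Lh > 0")
    case True
    have "(norm v)^2 / (2 * Lh) \<le> D"
      unfolding D_def F_def by (rule conj_strong[OF h_grad h_smooth True conj_finite conj_grad])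
    then show ?thesis using True by (simp add: field_simps)
  next
    case False
    then have Lz: "Lh = 0" using L0 by simp
    have "v = 0"
    proof (rule ccontr)
      assume "v \<noteq> 0"
      then have nv: "(norm v)^2 > 0" by simp
      define e where "e = (norm v)^2 / (4 * (D + 1))"
      have e0: "e > 0" unfolding e_def using nv D0 by simp
      have lipe: "norm (gh x - gh y) \<le> e * norm (x - y)" for x y
        using h_smooth[of x y] Lz e0 by simp
      have "(norm v)^2 / (2 * e) \<le> D"
        unfolding D_def F_def by (rule conj_strong[OF h_grad lipe e0 conj_finite conj_grad])
      then have "(norm v)^2 \<le> 2 * e * D" using e0 by (simp add: field_simps)
      also have "\<dots> = (norm v)^2 * (D / (2 * (D + 1)))" unfolding e_def using D0 by (simp add: field_simps)
      also have "\<dots> < (norm v)^2 * 1"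
        using nv D0 by (intro mult_strict_left_mono) (auto simp: field_simps)
      finally show False by simp
    qed
    then show ?thesis using Lz by simp
  qed
  have tp: "bregman F gs (x + t *\<^sub>R v) x \<le> t^2 * D
           + t^2 * M * (norm (y - x) + 2 * norm v) * (norm v)^2 / 2"
    unfolding D_def F_def
    by (rule taylor_part[OF conj_grad conj_hess hess_lip M0]) (use t in auto)
  define A where "A = norm (y - x) + 2 * norm v"
  define B where "B = norm (y - x) + norm v"
  have A0: "A \<ge> 0" unfolding A_def by simp
  have AB: "A \<le> 2 * B" unfolding A_def B_def by simp
  have t2: "t^2 \<ge> 0" by simp
  have "t^2 * M * A * (norm v)^2 / 2 = (t^2 * M * A) * ((norm v)^2 / 2)" by simp
  also have "\<dots> \<le> (t^2 * M * A) * (Lh * D)"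
    using SC M0 A0 t2 by (intro mult_left_mono) auto
  finally have s1: "t^2 * M * A * (norm v)^2 / 2 \<le> t^2 * D * (M * Lh * A)" by (simp add: mult_ac)
  have "M * Lh * A \<le> M * Lh * (2 * B)" using AB M0 L0 by (intro mult_left_mono) auto
  then have s2: "t^2 * D * (M * Lh * A) \<le> t^2 * D * (2 * M * Lh * B)"
    using D0 t2 by (intro mult_left_mono) (auto simp: mult_ac)
  have "bregman F gs (x + t *\<^sub>R v) x \<le> t^2 * D + t^2 * D * (2 * M * Lh * B)"
    using tp s1 s2 unfolding A_def by linarith
  also have "\<dots> = (1 + 2 * M * Lh * B) * t^2 * D" by (simp add: algebra_simps)
  finally show "bregman (convex_conj h) gs (x + t *\<^sub>R v) x
      \<le> (1 + 2 * M * Lh * (norm (y - x) + norm v)) * t\<^sup>2 * bregman (convex_conj h) gs (y + v) y"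
    unfolding F_def D_def B_def .
qed

end
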